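(* Let $A$ be a Banach lattice algebra. Then $BP_l(A)\cap BP_r(A)\subseteq BP(A)$, and the sets $BP(A)$, $BP_l(A)$, $BP_r(A)$ are norm closed. If moreover $A$ has an identity $e$, then $BP_l(A)=OI(A)=BP_r(A)$; in particular $OI(A)\subseteq BP(A)$.
   Context: A Banach lattice algebra is a real Banach lattice $A$ with an associative bilinear product making it a Banach algebra such that $xy\ge0$ whenever $x,y\ge0$; identity $e$ means a multiplicative identity with $\|e\|=1$. $L_a(x)=ax$, $R_a(x)=xa$. A band projection on a Banach lattice $X$ is an operator $P$ with $P^2=P$, $0\le P\le I_X$. $BP(A)=\{a\in A_+: L_aR_a\text{ is a band projection}\}$, $BP_l(A)=\{a\in A_+: L_a\text{ is a band projection}\}$, $BP_r(A)=\{a\in A_+: R_a\text{ is a band projection}\}$, $OI(A)=\{p: p^2=p,\ 0\le p\le e\}$. *)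

theory Defs
  imports "HOL-Analysis.Analysis"
begin

class banach_lattice = banach + ordered_real_vector + lattice +
  assumes lattice_norm: "sup x (- x) \<le> sup y (- y) \<Longrightarrow> norm x \<le> norm y"

class banach_lattice_algebra = banach_lattice + real_normed_algebra +
  assumes mult_pos: "0 \<le> x \<Longrightarrow> 0 \<le> y \<Longrightarrow> 0 \<le> x * y"

definition band_projection :: "('a::banach_lattice \<Rightarrow> 'a) \<Rightarrow> bool" where
  "band_projection P \<longleftrightarrow> bounded_linear P \<and> (P \<circ> P = P)
     \<and> (\<forall>x. 0 \<le> x \<longrightarrow> 0 \<le> P x \<and> P x \<le> x)"

definition L_op :: "'a::banach_lattice_algebra \<Rightarrow> 'a \<Rightarrow> 'a" where
  "L_op a = (\<lambda>x. a * x)"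

definition R_op :: "'a::banach_lattice_algebra \<Rightarrow> 'a \<Rightarrow> 'a" where
  "R_op a = (\<lambda>x. x * a)"

definition BP :: "'a::banach_lattice_algebra set" where
  "BP = {a. 0 \<le> a \<and> band_projection (L_op a \<circ> R_op a)}"

definition BP_l :: "'a::banach_lattice_algebra set" where
  "BP_l = {a. 0 \<le> a \<and> band_projection (L_op a)}"

definition BP_r :: "'a::banach_lattice_algebra set" where
  "BP_r = {a. 0 \<le> a \<and> band_projection (R_op a)}"

definition is_identity :: "'a::banach_lattice_algebra \<Rightarrow> bool" where
  "is_identity e \<longleftrightarrow> (\<forall>x. e * x = x \<and> x * e = x) \<and> norm e = 1"

definition OI :: "'a::banach_lattice_algebra \<Rightarrow> 'a set" where
  "OI e = {p. p * p = p \<and> 0 \<le> p \<and> p \<le> e}"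

end

theory Submission
  imports Defs "HOL-Library.Lattice_Algebras"
begin

subclass (in banach_lattice) lattice_ab_group_add ..

lemma abs_nonneg_bl: "0 \<le> sup (d::'a::banach_lattice) (- d)"
proof -
  have "d + (- d) \<le> sup d (- d) + sup d (- d)"
    by (intro add_mono) auto
  then show ?thesis by simp
qed

lemma abs_pos_bl: "0 \<le> (x::'a::banach_lattice) \<Longrightarrow> sup x (- x) = x"
  by (rule sup_absorb1) (meson neg_le_0_iff_le order_trans)

lemma norm_mono_bl: "0 \<le> (x::'a::banach_lattice) \<Longrightarrow> x \<le> y \<Longrightarrow> norm x \<le> norm y"
  by (rule lattice_norm) (simp add: abs_pos_bl)

lemma cone_closed: "closed {x::'a::banach_lattice. 0 \<le> x}"
proof -
  have key: "norm (inf x 0) \<le> norm (x - y)" if "0 \<le> y" for x y :: 'a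
  proof (rule lattice_norm)
    let ?d = "x - y"
    have w0: "inf x 0 \<le> 0" by simp
    have "inf ?d 0 \<le> inf x 0"
      using that by (intro inf_mono) auto
    hence "- inf x 0 \<le> - inf ?d 0" by (rule le_imp_neg_le)
    also have "- inf ?d 0 = sup (- ?d) 0" by (simp only: neg_inf_eq_sup minus_zero)
    also have "\<dots> \<le> sup ?d (- ?d)" using abs_nonneg_bl[of ?d] by auto
    finally have a: "- inf x 0 \<le> sup ?d (- ?d)" .
    have b: "inf x 0 \<le> sup ?d (- ?d)" using w0 abs_nonneg_bl[of ?d] by (meson order_trans)
    show "sup (inf x 0) (- inf x 0) \<le> sup ?d (- ?d)" using a b by simp
  qed
  show ?thesis unfolding closed_def open_dist
  proof (intro ballI)
    fix x :: 'a assume "x \<in> - Collect ((\<le>) 0)"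
    hence nx: "\<not> 0 \<le> x" by simp
    have "inf x 0 \<noteq> 0"
    proof
      assume "inf x 0 = 0" hence "0 \<le> x" by (metis inf.absorb_iff2)
      with nx show False by simp
    qed
    hence pos: "norm (inf x 0) > 0" by simp
    show "\<exists>e>0. \<forall>y. dist y x < e \<longrightarrow> y \<in> - Collect ((\<le>) 0)"
    proof (intro exI[of _ "norm (inf x 0)"] conjI allI impI pos)
      fix y assume "dist y x < norm (inf x 0)"
      hence "norm (x - y) < norm (inf x 0)" by (simp add: dist_norm norm_minus_commute)
      thus "y \<in> - Collect ((\<le>) 0)" using key[of y x] by auto
    qed
  qed
qed

lemma closed_pre:
  assumes "\<And>a. continuous (at a) (f :: 'b::t2_space \<Rightarrow> 'a::banach_lattice)"
  shows "closed {a. 0 \<le> f a}"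
proof -
  have "{a. 0 \<le> f a} = f -` {x. 0 \<le> x}" by auto
  thus ?thesis using continuous_closed_vimage[OF cone_closed assms] by simp
qed

lemma mult_right_mono_bl:
  "(x::'a::banach_lattice_algebra) \<le> y \<Longrightarrow> 0 \<le> z \<Longrightarrow> x * z \<le> y * z"
  using mult_pos[of "y - x" z] by (simp add: left_diff_distrib)

lemma mult_left_mono_bl:
  "(x::'a::banach_lattice_algebra) \<le> y \<Longrightarrow> 0 \<le> z \<Longrightarrow> z * x \<le> z * y"
  using mult_pos[of z "y - x"] by (simp add: right_diff_distrib)

lemma BP_l_iff: "(a::'a::banach_lattice_algebra) \<in> BP_l \<longleftrightarrow> 0 \<le> a \<and> (\<forall>x. a * (a * x) = a * x)
   \<and> (\<forall>x. 0 \<le> x \<longrightarrow> 0 \<le> a * x \<and> a * x \<le> x)"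
  unfolding BP_l_def band_projection_def L_op_def
  using bounded_linear_mult_right[of a] by (auto simp: fun_eq_iff)

lemma BP_r_iff: "(a::'a::banach_lattice_algebra) \<in> BP_r \<longleftrightarrow> 0 \<le> a \<and> (\<forall>x. (x * a) * a = x * a)
   \<and> (\<forall>x. 0 \<le> x \<longrightarrow> 0 \<le> x * a \<and> x * a \<le> x)"
  unfolding BP_r_def band_projection_def R_op_def
  using bounded_linear_mult_left[of a] by (auto simp: fun_eq_iff)

lemma BP_iff: "(a::'a::banach_lattice_algebra) \<in> BP \<longleftrightarrow> 0 \<le> a \<and> (\<forall>x. a * ((a * (x * a)) * a) = a * (x * a))
   \<and> (\<forall>x. 0 \<le> x \<longrightarrow> 0 \<le> a * (x * a) \<and> a * (x * a) \<le> x)"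
proof -
  have "bounded_linear (\<lambda>x. a * (x * a))"
    using bounded_linear_compose[OF bounded_linear_mult_right[of a] bounded_linear_mult_left[of a]]
    by (simp add: o_def)
  thus ?thesis
  unfolding BP_def band_projection_def R_op_def L_op_def
  by (auto simp: fun_eq_iff o_def)
qed

lemma part1: "BP_l \<inter> BP_r \<subseteq> (BP :: 'a::banach_lattice_algebra set)"
proof
  fix a :: 'a assume "a \<in> BP_l \<inter> BP_r"
  hence l: "0 \<le> a" "\<And>x. a * (a * x) = a * x" "\<And>x. 0 \<le> x \<Longrightarrow> 0 \<le> a * x \<and> a * x \<le> x"
    and r: "\<And>x. (x * a) * a = x * a" "\<And>x. 0 \<le> x \<Longrightarrow> 0 \<le> x * a \<and> x * a \<le> x"
    by (auto simp: BP_l_iff BP_r_iff)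
  show "a \<in> BP" unfolding BP_iff
  proof (intro conjI allI impI)
    fix x
    have "a * ((a * (x * a)) * a) = a * (a * ((x * a) * a))" by (simp add: mult.assoc)
    also have "\<dots> = a * (x * a)" using l(2) r(1) by simp
    finally show "a * ((a * (x * a)) * a) = a * (x * a)" .
  next
    fix x :: 'a assume x: "0 \<le> x"
    show "0 \<le> a * (x * a)" using l(3) r(2) x by blast
    have "a * (x * a) \<le> x * a" using l(3) r(2) x by blast
    also have "\<dots> \<le> x" using r(2) x by blast
    finally show "a * (x * a) \<le> x" .
  qed (rule l(1))
qed

lemma closed_BP_l: "closed (BP_l :: 'a::banach_lattice_algebra set)"
proof -
  have "BP_l = {a::'a. 0 \<le> a} \<inter> (\<Inter>x. {a. a * (a * x) = a * x})
     \<inter> (\<Inter>x\<in>{x. 0 \<le> x}. {a. 0 \<le> a * x} \<inter> {a. 0 \<le> x - a * x})"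
    by (auto simp: BP_l_iff)
  moreover have "closed \<dots>"
    by (intro closed_Int closed_INT ballI closed_pre closed_Collect_eq continuous_intros cone_closed
        continuous_on_mult_left continuous_on_mult_right)
  ultimately show ?thesis by simp
qed

lemma closed_BP_r: "closed (BP_r :: 'a::banach_lattice_algebra set)"
proof -
  have "BP_r = {a::'a. 0 \<le> a} \<inter> (\<Inter>x. {a. (x * a) * a = x * a})
     \<inter> (\<Inter>x\<in>{x. 0 \<le> x}. {a. 0 \<le> x * a} \<inter> {a. 0 \<le> x - x * a})"
    by (auto simp: BP_r_iff)
  moreover have "closed \<dots>"
    by (intro closed_Int closed_INT ballI closed_pre closed_Collect_eq continuous_intros cone_closed)
  ultimately show ?thesis by simp
qed

lemma closed_BP: "closed (BP :: 'a::banach_lattice_algebra set)"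
proof -
  have "BP = {a::'a. 0 \<le> a} \<inter> (\<Inter>x. {a. a * ((a * (x * a)) * a) = a * (x * a)})
     \<inter> (\<Inter>x\<in>{x. 0 \<le> x}. {a. 0 \<le> a * (x * a)} \<inter> {a. 0 \<le> x - a * (x * a)})"
    by (auto simp: BP_iff)
  moreover have "closed \<dots>"
    by (intro closed_Int closed_INT ballI closed_pre closed_Collect_eq continuous_intros cone_closed)
  ultimately show ?thesis by simp
qed


lemma identity_pos:
  fixes e :: "'a::banach_lattice_algebra"
  assumes id: "is_identity e"
  shows "0 \<le> e"
proof -
  have el: "\<And>x. e * x = x" and er: "\<And>x. x * e = x" and ne: "norm e = 1"
    using id by (auto simp: is_identity_def)
  define u where "u = sup e 0"
  define v where "v = sup (- e) 0"
  have u0: "0 \<le> u" and v0: "0 \<le> v" by (auto simp: u_def v_def)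
  have euv: "e = u - v"
  proof -
    have "u - v = sup e 0 + inf e 0"
      by (simp only: u_def v_def diff_conv_add_uminus neg_sup_eq_inf minus_minus minus_zero)
    also have "\<dots> = e + 0" by (rule add_eq_inf_sup[symmetric])
    finally show ?thesis by simp
  qed
  have hx: "x \<le> u * x" if "0 \<le> x" for x
  proof -
    have "x = u * x - v * x" using el[of x] by (simp add: euv left_diff_distrib)
    moreover have "0 \<le> v * x" using mult_pos[OF v0 that] .
    ultimately show ?thesis by (metis diff_le_eq le_add_same_cancel1)
  qed
  have vu: "v * u = v + v * v"
    using er[of v] by (simp add: euv right_diff_distrib algebra_simps)
  have uu: "u * u = u + v * u"
    using el[of u] by (simp add: euv left_diff_distrib algebra_simps)
  have vu_ge: "v \<le> v * u" using vu mult_pos[OF v0 v0] by simp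
  have nu: "norm u \<le> 1"
  proof -
    have "sup u (- u) = u" by (rule abs_pos_bl[OF u0])
    also have "u \<le> sup e (- e)" using abs_nonneg_bl[of e] by (simp add: u_def)
    finally have "norm u \<le> norm e" by (rule lattice_norm)
    thus ?thesis using ne by simp
  qed
  have ind: "\<exists>w. u + real n *\<^sub>R v \<le> w \<and> norm w \<le> 1" for n
  proof (induction n)
    case 0 thus ?case using nu by (intro exI[of _ u]) simp
  next
    case (Suc n)
    then obtain w where w: "u + real n *\<^sub>R v \<le> w" "norm w \<le> 1" by blast
    have "(u + real n *\<^sub>R v) * u = u * u + real n *\<^sub>R (v * u)"
      by (simp add: distrib_right)
    also have "\<dots> = u + v * u + real n *\<^sub>R (v * u)" using uu by simp
    finally have eq: "(u + real n *\<^sub>R v) * u = u + v * u + real n *\<^sub>R (v * u)" .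
    have "u + real (Suc n) *\<^sub>R v = u + v + real n *\<^sub>R v" by (simp add: scaleR_left_distrib algebra_simps)
    also have "\<dots> \<le> u + v * u + real n *\<^sub>R (v * u)"
      using vu_ge by (intro add_mono order_refl scaleR_left_mono) auto
    also have "\<dots> = (u + real n *\<^sub>R v) * u" using eq by simp
    also have "\<dots> \<le> w * u" by (rule mult_right_mono_bl[OF w(1) u0])
    finally have a: "u + real (Suc n) *\<^sub>R v \<le> w * u" .
    have "norm (w * u) \<le> norm w * norm u" by (rule norm_mult_ineq)
    also have "\<dots> \<le> 1 * 1" using w(2) nu by (intro mult_mono) auto
    finally show ?case using a by (intro exI[of _ "w * u"]) simp
  qed
  have bnd: "real n * norm v \<le> 1" for n
  proof -
    obtain w where w: "u + real n *\<^sub>R v \<le> w" "norm w \<le> 1" using ind by blast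
    have p: "0 \<le> real n *\<^sub>R v" using v0 by (simp add: scaleR_nonneg_nonneg)
    have "real n *\<^sub>R v \<le> u + real n *\<^sub>R v" using u0 by simp
    hence "real n *\<^sub>R v \<le> w" using w(1) by (rule order_trans)
    hence "norm (real n *\<^sub>R v) \<le> norm w" by (rule norm_mono_bl[OF p])
    thus ?thesis using w(2) by simp
  qed
  have "v = 0"
  proof (rule ccontr)
    assume "v \<noteq> 0"
    hence "0 < norm v" by simp
    then obtain n where "1 < real n * norm v" using ex_less_of_nat_mult by blast
    with bnd[of n] show False by simp
  qed
  thus ?thesis using euv u0 by simp
qed

lemma part_id:
  fixes e :: "'a::banach_lattice_algebra"
  assumes id: "is_identity e"
  shows "BP_l = OI e \<and> OI e = BP_r"
proof -
  have el: "\<And>x. e * x = x" and er: "\<And>x. x * e = x"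
    using id by (auto simp: is_identity_def)
  have e0: "0 \<le> e" by (rule identity_pos[OF id])
  have l: "BP_l = OI e"
  proof (intro set_eqI iffI)
    fix a :: 'a assume "a \<in> BP_l"
    hence a: "0 \<le> a" "\<And>x. a * (a * x) = a * x" "\<And>x. 0 \<le> x \<Longrightarrow> 0 \<le> a * x \<and> a * x \<le> x"
      by (auto simp: BP_l_iff)
    show "a \<in> OI e" unfolding OI_def
      using a(1) a(2)[of e] a(3)[OF e0] er by simp
  next
    fix a :: 'a assume "a \<in> OI e"
    hence a: "a * a = a" "0 \<le> a" "a \<le> e" by (auto simp: OI_def)
    show "a \<in> BP_l" unfolding BP_l_iff
    proof (intro conjI allI impI)
      fix x :: 'a assume x: "0 \<le> x"
      show "0 \<le> a * x" using mult_pos[OF a(2) x] .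
      show "a * x \<le> x" using mult_right_mono_bl[OF a(3) x] el by simp
    qed (use a in \<open>auto simp: mult.assoc[symmetric]\<close>)
  qed
  have r: "BP_r = OI e"
  proof (intro set_eqI iffI)
    fix a :: 'a assume "a \<in> BP_r"
    hence a: "0 \<le> a" "\<And>x. (x * a) * a = x * a" "\<And>x. 0 \<le> x \<Longrightarrow> 0 \<le> x * a \<and> x * a \<le> x"
      by (auto simp: BP_r_iff)
    show "a \<in> OI e" unfolding OI_def
      using a(1) a(2)[of e] a(3)[OF e0] el by simp
  next
    fix a :: 'a assume "a \<in> OI e"
    hence a: "a * a = a" "0 \<le> a" "a \<le> e" by (auto simp: OI_def)
    show "a \<in> BP_r" unfolding BP_r_iff
    proof (intro conjI allI impI)
      fix x :: 'a assume x: "0 \<le> x"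
      show "0 \<le> x * a" using mult_pos[OF x a(2)] .
      show "x * a \<le> x" using mult_left_mono_bl[OF a(3) x] er by simp
    qed (use a in \<open>auto simp: mult.assoc\<close>)
  qed
  show ?thesis using l r by simp
qed

theorem mainTheorem18:
  shows "(BP_l \<inter> BP_r \<subseteq> (BP :: 'a::banach_lattice_algebra set))
    \<and> closed (BP :: 'a set) \<and> closed (BP_l :: 'a set) \<and> closed (BP_r :: 'a set)
    \<and> (\<forall>e::'a. is_identity e \<longrightarrow>
          BP_l = OI e \<and> OI e = BP_r \<and> OI e \<subseteq> BP)"
  using part1 closed_BP closed_BP_l closed_BP_r part_id
  by (metis Int_absorb)

end
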